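(* Fix $N>0$ and let $S=\{(v,w)\in\mathbb{C}^2\times\mathbb{C}^2:\ [v\,w]=N\}$ where $[a\,b]:=a^{\dot2}b^{\dot1}-a^{\dot1}b^{\dot2}$. For $u\in\mathbb{C}^2\setminus\{0\}$ put $\hat u=(-\bar u^{\dot2},\bar u^{\dot1})$, $\|u\|^2=|u^{\dot1}|^2+|u^{\dot2}|^2$, $\vartheta=\sqrt{1+N/\|u\|^2}$, and for $\sigma\in\mathbb{C}^\times$ $$\Phi(u,\sigma)=\big(v(\sigma),w(\sigma)\big),\qquad v(\sigma)=u+\sigma\hat u,\quad w(\sigma)=\hat u+\sigma^{-1}\vartheta^2u .$$ Then: (i) $\Phi(u,\sigma)\in S$ for all $u\neq0,\sigma\neq0$; (ii) the map $\iota(v,w)=(-\hat w,\hat v)$ is a fixed-point-free antiholomorphic involution of $S$, and each reparametrized curve $\sigma\mapsto\Phi(u,\vartheta\sigma)$ is mapped by $\iota$ to itself, the point with parameter $\sigma$ going to the point with parameter $-1/\bar\sigma$; (iii) let $\Omega_N$ be the holomorphic $3$-form on $S$ equal to $-\,dv^{\dot1}\wedge dv^{\dot2}\wedge dw^{\dot1}/v^{\dot1}$ where $v^{\dot1}\neq0$ (the Poincaré residue of $-d^2v\wedge d^2w/([v\,w]-N)$). Then the fibre integral of $\Phi^*\Omega_N$ over a small circle $|\sigma|=\varepsilon$, oriented counterclockwise, satisfies $$\frac{1}{2\pi}\oint_{|\sigma|=\varepsilon}\Phi^*\Omega_N=\omega_N:=i\big(du^{\dot1}\wedge d\bar u^{\dot1}+du^{\dot2}\wedge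 d\bar u^{\dot2}\big)+iN\,\frac{[u\,du]\wedge[\hat u\,d\hat u]}{\|u\|^4},$$ and $\omega_N=i\partial\bar\partial K$ with $K=\|u\|^2+N\log\|u\|^2$.
   Context: Complex conjugation of a pair $a=(a^{\dot1},a^{\dot2})$ is the "quaternionic conjugate" $\hat a=(-\bar a^{\dot2},\bar a^{\dot1})$, applied componentwise also to differentials; $[u\,du]=u^{\dot2}du^{\dot1}-u^{\dot1}du^{\dot2}$ and $[\hat u\,d\hat u]=\bar u^{\dot2}d\bar u^{\dot1}-\bar u^{\dot1}d\bar u^{\dot2}$. The fibre integral of a form $d\sigma\wedge\beta+(\text{terms without }d\sigma,d\bar\sigma)$ over the circle is $(\oint\cdot\,d\sigma)\,\beta$, computed by residues in $\sigma$. *)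

theory Defs
  imports "HOL-Analysis.Analysis"
begin

text \<open>Points of C^2 are pairs (a1, a2) of complex numbers; points of C^2 x C^2 are pairs (v, w).
  Tangent vectors are elements of the same (real) vector spaces.\<close>

type_synonym c2 = "complex \<times> complex"
type_synonym c4 = "c2 \<times> c2"

definition hatc :: "c2 \<Rightarrow> c2" where
  "hatc a = (- cnj (snd a), cnj (fst a))"

definition brk :: "c2 \<Rightarrow> c2 \<Rightarrow> complex" where
  "brk a b = snd a * fst b - fst a * snd b"

definition nsq :: "c2 \<Rightarrow> real" where
  "nsq u = (cmod (fst u))\<^sup>2 + (cmod (snd u))\<^sup>2"

definition theta :: "real \<Rightarrow> c2 \<Rightarrow> real" where
  "theta N u = sqrt (1 + N / nsq u)"

definition cscal :: "complex \<Rightarrow> c2 \<Rightarrow> c2" where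
  "cscal c a = (c * fst a, c * snd a)"

definition S :: "real \<Rightarrow> c4 set" where
  "S N = {p. brk (fst p) (snd p) = of_real N}"

definition Phi :: "real \<Rightarrow> c2 \<Rightarrow> complex \<Rightarrow> c4" where
  "Phi N u \<sigma> = (u + cscal \<sigma> (hatc u),
                 hatc u + cscal (inverse \<sigma> * of_real ((theta N u)\<^sup>2)) u)"

definition iota :: "c4 \<Rightarrow> c4" where
  "iota p = (- hatc (snd p), hatc (fst p))"

definition cscal4 :: "complex \<Rightarrow> c4 \<Rightarrow> c4" where
  "cscal4 c p = (cscal c (fst p), cscal c (snd p))"

definition antiholomorphic_on :: "c4 set \<Rightarrow> (c4 \<Rightarrow> c4) \<Rightarrow> bool" where
  "antiholomorphic_on U f \<longleftrightarrow>
     (\<forall>p\<in>U. \<exists>D. (f has_derivative D) (at p) \<and> (\<forall>A. D (cscal4 \<i> A) = cscal4 (- \<i>) (D A)))"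

definition det3 :: "complex \<Rightarrow> complex \<Rightarrow> complex \<Rightarrow> complex \<Rightarrow> complex \<Rightarrow> complex
                    \<Rightarrow> complex \<Rightarrow> complex \<Rightarrow> complex \<Rightarrow> complex" where
  "det3 a11 a12 a13 a21 a22 a23 a31 a32 a33 =
     a11 * (a22 * a33 - a23 * a32) - a12 * (a21 * a33 - a23 * a31) + a13 * (a21 * a32 - a22 * a31)"

text \<open>The 3-form Omega_N on S in the chart v1 /= 0:  - dv1 /\ dv2 /\ dw1 / v1,
  evaluated at the point p on tangent vectors A, B, C.
  (a1 /\ a2 /\ a3)(A,B,C) = det [a_i(A_j)].\<close>
definition OmegaN :: "real \<Rightarrow> c4 \<Rightarrow> c4 \<Rightarrow> c4 \<Rightarrow> c4 \<Rightarrow> complex" where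
  "OmegaN N p A B C =
     - det3 (fst (fst A)) (snd (fst A)) (fst (snd A))
            (fst (fst B)) (snd (fst B)) (fst (snd B))
            (fst (fst C)) (snd (fst C)) (fst (snd C)) / fst (fst p)"

definition PhiMap :: "real \<Rightarrow> c2 \<times> complex \<Rightarrow> c4" where
  "PhiMap N x = Phi N (fst x) (snd x)"

definition pullOmega :: "real \<Rightarrow> c2 \<times> complex \<Rightarrow> c2 \<times> complex \<Rightarrow> c2 \<times> complex \<Rightarrow> c2 \<times> complex \<Rightarrow> complex" where
  "pullOmega N x X Y Z =
     (let D = frechet_derivative (PhiMap N) (at x) in OmegaN N (PhiMap N x) (D X) (D Y) (D Z))"

text \<open>Fibre integral over the circle |sigma| = eps, counterclockwise, as a 2-form in u:
  integrate the 3-form with the circle tangent in the first slot and the horizontal lifts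
  (X,0), (Y,0) of the base tangent vectors in the other slots.\<close>
definition fibre_int :: "real \<Rightarrow> real \<Rightarrow> c2 \<Rightarrow> c2 \<Rightarrow> c2 \<Rightarrow> complex" where
  "fibre_int N \<epsilon> u X Y =
     integral {0..2*pi} (\<lambda>t. pullOmega N (u, of_real \<epsilon> * cis t)
                                ((0,0), \<i> * of_real \<epsilon> * cis t) (X, 0) (Y, 0))"

definition wedge2 :: "(c2 \<Rightarrow> complex) \<Rightarrow> (c2 \<Rightarrow> complex) \<Rightarrow> c2 \<Rightarrow> c2 \<Rightarrow> complex" where
  "wedge2 a b X Y = a X * b Y - a Y * b X"

definition omegaN :: "real \<Rightarrow> c2 \<Rightarrow> c2 \<Rightarrow> c2 \<Rightarrow> complex" where
  "omegaN N u X Y =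
     \<i> * (wedge2 (\<lambda>Z. fst Z) (\<lambda>Z. cnj (fst Z)) X Y + wedge2 (\<lambda>Z. snd Z) (\<lambda>Z. cnj (snd Z)) X Y)
     + \<i> * of_real N *
       wedge2 (\<lambda>Z. snd u * fst Z - fst u * snd Z)
              (\<lambda>Z. cnj (snd u) * cnj (fst Z) - cnj (fst u) * cnj (snd Z)) X Y
       / of_real ((nsq u)\<^sup>2)"

definition ecoord :: "nat \<Rightarrow> c2" where
  "ecoord j = (if j = 1 then (1, 0) else (0, 1))"

definition coordc :: "nat \<Rightarrow> c2 \<Rightarrow> complex" where
  "coordc j Z = (if j = 1 then fst Z else snd Z)"

definition wirt :: "nat \<Rightarrow> (c2 \<Rightarrow> complex) \<Rightarrow> c2 \<Rightarrow> complex" where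
  "wirt j F x = (frechet_derivative F (at x) (ecoord j)
                 - \<i> * frechet_derivative F (at x) (cscal \<i> (ecoord j))) / 2"

definition wirtbar :: "nat \<Rightarrow> (c2 \<Rightarrow> complex) \<Rightarrow> c2 \<Rightarrow> complex" where
  "wirtbar j F x = (frechet_derivative F (at x) (ecoord j)
                    + \<i> * frechet_derivative F (at x) (cscal \<i> (ecoord j))) / 2"

definition i_ddbar :: "(c2 \<Rightarrow> complex) \<Rightarrow> c2 \<Rightarrow> c2 \<Rightarrow> c2 \<Rightarrow> complex" where
  "i_ddbar F x X Y = \<i> * (\<Sum>j\<in>{1,2}. \<Sum>k\<in>{1,2}.
       wirt j (wirtbar k F) x * wedge2 (coordc j) (\<lambda>Z. cnj (coordc k Z)) X Y)"

definition Kpot :: "real \<Rightarrow> c2 \<Rightarrow> complex" where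
  "Kpot N u = of_real (nsq u + N * ln (nsq u))"

end

theory Submission
  imports Defs
begin


lemma theta_sq: assumes "N > 0" shows "(theta N u)\<^sup>2 = 1 + N / nsq u"
  unfolding theta_def using assms by (simp add: nsq_def)

lemma theta_pos: assumes "N > 0" shows "theta N u > 0"
  unfolding theta_def using assms by (simp add: nsq_def add_pos_nonneg)

lemma nsq_c: "complex_of_real (nsq u) = fst u * cnj (fst u) + snd u * cnj (snd u)"
  unfolding nsq_def of_real_add complex_norm_square by simp

lemma nsq_pos: "u \<noteq> 0 \<Longrightarrow> nsq u > 0"
  by (cases u) (auto simp: nsq_def zero_prod_def add_pos_nonneg add_nonneg_pos)

lemma part1: assumes N: "N > 0" and u: "u \<noteq> 0" and s: "\<sigma> \<noteq> 0"
  shows "Phi N u \<sigma> \<in> S N"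
proof -
  have n: "nsq u > 0" using nsq_pos[OF u] .
  have T: "complex_of_real ((theta N u)\<^sup>2) = 1 + of_real N / (fst u * cnj (fst u) + snd u * cnj (snd u))"
    using theta_sq[OF N] by (simp flip: nsq_c)
  have nz: "fst u * cnj (fst u) + snd u * cnj (snd u) \<noteq> 0" using n nsq_c[of u] by (metis of_real_eq_0_iff less_irrefl)
  define c where "c = fst u * cnj (fst u) + snd u * cnj (snd u)"
  have "brk (fst (Phi N u \<sigma>)) (snd (Phi N u \<sigma>)) = (complex_of_real ((theta N u)\<^sup>2) - 1) * c"
    using s unfolding Phi_def c_def by (simp add: brk_def hatc_def cscal_def algebra_simps, simp add: mult.assoc[symmetric])
  also have "\<dots> = of_real N" using nz unfolding T c_def by simp
  finally show ?thesis by (simp add: S_def)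
qed

lemma hat_hat: "hatc (hatc a) = - a" by (cases a) (simp add: hatc_def)
lemma hat_minus: "hatc (- a) = - hatc a" by (simp add: hatc_def)
lemma brk_hat: "brk (hatc a) (hatc b) = cnj (brk a b)" by (simp add: hatc_def brk_def)

lemma part2a: "iota ` S N \<subseteq> S N"
  by (auto simp: S_def iota_def brk_hat hatc_def brk_def algebra_simps) (drule arg_cong[of _ _ cnj], simp)

lemma part2b: "iota (iota p) = p"
  by (cases p) (simp add: iota_def hat_hat hat_minus)

lemma part2c: assumes "N > 0" "p \<in> S N" shows "iota p \<noteq> p"
proof
  assume h: "iota p = p"
  obtain v w where p: "p = (v, w)" by (cases p)
  have w: "w = hatc v" using h p by (simp add: iota_def)
  have "brk v w = - of_real (nsq v)"
    by (simp add: w brk_def hatc_def nsq_c algebra_simps)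
  moreover have "brk v w = of_real N" using assms(2) p by (simp add: S_def)
  ultimately have "N = - nsq v" by (metis of_real_eq_iff of_real_minus)
  moreover have "nsq v \<ge> 0" by (simp add: nsq_def)
  ultimately show False using assms(1) by linarith
qed

lemma part2d: "antiholomorphic_on UNIV iota"
  unfolding antiholomorphic_on_def
proof
  fix p :: c4
  have bl: "bounded_linear iota"
    by unfold_locales (auto simp: iota_def hatc_def algebra_simps norm_Pair intro!: exI[of _ 2])
  show "\<exists>D. (iota has_derivative D) (at p) \<and> (\<forall>A. D (cscal4 \<i> A) = cscal4 (- \<i>) (D A))"
    by (rule exI[of _ iota]) (auto simp: bounded_linear.has_derivative[OF bl] iota_def hatc_def cscal4_def cscal_def)
qed

lemma part2e: assumes N: "N > 0" and u: "u \<noteq> 0" and s: "\<sigma> \<noteq> 0"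
  shows "iota (Phi N u (of_real (theta N u) * \<sigma>)) = Phi N u (of_real (theta N u) * (- 1 / cnj \<sigma>))"
proof -
  have t: "theta N u \<noteq> 0" using theta_pos[OF N, of u] by simp
  show ?thesis using s t
    by (cases u) (simp add: iota_def Phi_def hatc_def cscal_def power2_eq_square field_simps)
qed


definition nsqr :: "c2 \<Rightarrow> real" where
  "nsqr x = (Re(fst x))\<^sup>2 + (Im(fst x))\<^sup>2 + (Re (snd x))\<^sup>2 + (Im (snd x))\<^sup>2"

lemma nsq_ri: "nsq x = nsqr x"
  by (simp add: nsq_def nsqr_def cmod_power2)

definition dn :: "c2 \<Rightarrow> c2 \<Rightarrow> real" where
  "dn x h = 2*(Re(fst x)*Re(fst h) + Im(fst x)*Im(fst h) + Re(snd x)*Re(snd h) + Im(snd x)*Im(snd h))"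

lemma d_nsqr: "(nsqr has_derivative dn x) (at x)"
  unfolding nsqr_def[abs_def] dn_def
  by (auto intro!: derivative_eq_intros simp: fun_eq_iff algebra_simps)

lemma dK: assumes "x \<noteq> 0"
  shows "(Kpot N has_derivative (\<lambda>h. of_real ((1 + N / nsq x) * dn x h))) (at x)"
proof -
  have e: "Kpot N = (\<lambda>x. of_real (nsqr x + N * ln (nsqr x)))"
    by (simp add: fun_eq_iff Kpot_def nsq_ri)
  have p: "nsqr x > 0" using nsq_pos[OF assms] by (simp add: nsq_ri)
  show ?thesis unfolding e nsq_ri
    using p by (auto intro!: derivative_eq_intros d_nsqr simp: fun_eq_iff field_simps)
qed

lemma wirtbarK: assumes "x \<noteq> 0" "k \<in> {1,2}"
  shows "wirtbar k (Kpot N) x = of_real (1 + N / nsq x) * coordc k x"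
  using assms unfolding wirtbar_def frechet_derivative_at[OF dK[OF assms(1)], symmetric]
  by (auto simp: dn_def ecoord_def cscal_def coordc_def complex_eq_iff algebra_simps)

definition G :: "real \<Rightarrow> nat \<Rightarrow> c2 \<Rightarrow> complex" where
  "G N k x = of_real (1 + N / nsqr x) * coordc k x"

lemma bl_coordc: "bounded_linear (coordc k)"
  unfolding coordc_def by (cases "k = 1") (simp_all add: bounded_linear_fst bounded_linear_snd)

lemma dG: assumes "x \<noteq> 0"
  shows "(G N k has_derivative (\<lambda>h. of_real (- N * dn x h / (nsq x)\<^sup>2) * coordc k x
           + of_real (1 + N / nsq x) * coordc k h)) (at x)"
proof -
  have p: "nsqr x > 0" using nsq_pos[OF assms] by (simp add: nsq_ri)
  show ?thesis unfolding G_def[abs_def] nsq_ri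
    using p by (auto intro!: derivative_eq_intros d_nsqr bounded_linear.has_derivative[OF bl_coordc] simp: fun_eq_iff field_simps power2_eq_square)
qed

lemma wirtbar_eq: assumes "x \<noteq> 0" "k \<in> {1,2}" shows "wirtbar k (Kpot N) x = G N k x"
  using wirtbarK[OF assms] by (simp add: G_def nsq_ri)

lemma part4: assumes N: "N > 0" and u: "u \<noteq> 0"
  shows "omegaN N u X Y = i_ddbar (Kpot N) u X Y"
proof -
  have fd: "frechet_derivative (wirtbar k (Kpot N)) (at u) = (\<lambda>h. of_real (- N * dn u h / (nsq u)\<^sup>2) * coordc k u
           + of_real (1 + N / nsq u) * coordc k h)" if k: "k \<in> {1,2}" for k
    apply (rule frechet_derivative_at[symmetric])
    apply (rule has_derivative_transform_within_open[OF dG[OF u] open_delete[OF open_UNIV, of 0]])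
    using u wirtbar_eq[OF _ k] by auto
  have w: "wirt j (wirtbar k (Kpot N)) u =
     (if j = k then of_real (1 + N / nsq u) else 0) - of_real (N / (nsq u)\<^sup>2) * coordc k u * cnj (coordc j u)"
    if "j \<in> {1,2}" "k \<in> {1,2}" for j k
    using that unfolding wirt_def fd[OF that(2)]
    by (auto simp: dn_def ecoord_def cscal_def coordc_def complex_eq_iff algebra_simps power2_eq_square
             diff_divide_distrib add_divide_distrib)
  have n: "nsq u > 0" using nsq_pos[OF u] .
  have nz: "fst u * cnj (fst u) + snd u * cnj (snd u) \<noteq> 0" using n nsq_c[of u] by (metis of_real_eq_0_iff less_irrefl)
  define c where "c = fst u * cnj (fst u) + snd u * cnj (snd u)"
  have cdef: "complex_of_real (nsq u) = c" by (simp add: c_def nsq_c)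
  have cnz: "c \<noteq> 0" using nz c_def by simp
  show ?thesis
    unfolding i_ddbar_def omegaN_def
    apply (simp add: w wedge2_def coordc_def)
    apply (simp only: cdef of_real_divide of_real_add of_real_1 of_real_power)
    using cnz apply (simp add: field_simps power2_eq_square)
    apply (simp add: c_def algebra_simps)
    done
qed


lemma key:
  fixes u1 u2 ub1 ub2 x1 x2 xb1 xb2 y1 y2 yb1 yb2 s n c :: complex
  assumes cdef: "c = u1*ub1 + u2*ub2" and cnz: "c \<noteq> 0" and s: "s \<noteq> 0" and v: "u1 - s*ub2 \<noteq> 0"
  defines "T \<equiv> 1 + n / c"
  defines "tX \<equiv> - n * (x1*ub1 + u1*xb1 + x2*ub2 + u2*xb2) / c^2"
  defines "tY \<equiv> - n * (y1*ub1 + u1*yb1 + y2*ub2 + u2*yb2) / c^2"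
  shows "- det3 (\<i> * s*(-ub2)) (\<i> * s*ub1) (- (\<i> * s) / s^2 * T * u1)
            (x1 - s*xb2) (x2 + s*xb1) (-xb2 + (tX*u1 + T*x1)/s)
            (y1 - s*yb2) (y2 + s*yb1) (-yb2 + (tY*u1 + T*y1)/s)
          / (u1 - s*ub2)
        = (- \<i> * T * (x2*y1 - x1*y2)) / s
          + \<i> * ((x1*yb1 - y1*xb1) + (x2*yb2 - y2*xb2)
                 + n * ((u2*x1-u1*x2)*(ub2*yb1-ub1*yb2) - (u2*y1-u1*y2)*(ub2*xb1-ub1*xb2)) / c^2)
          + (- \<i> * (xb2*yb1 - xb1*yb2)) * s"
proof -
  have "- det3 (\<i> * s*(-ub2)) (\<i> * s*ub1) (- (\<i> * s) / s^2 * T * u1)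
            (x1 - s*xb2) (x2 + s*xb1) (-xb2 + (tX*u1 + T*x1)/s)
            (y1 - s*yb2) (y2 + s*yb1) (-yb2 + (tY*u1 + T*y1)/s)
        = (u1 - s*ub2) * ((- \<i> * T * (x2*y1 - x1*y2)) / s
          + \<i> * ((x1*yb1 - y1*xb1) + (x2*yb2 - y2*xb2)
                 + n * ((u2*x1-u1*x2)*(ub2*yb1-ub1*yb2) - (u2*y1-u1*y2)*(ub2*xb1-ub1*xb2)) / c^2)
          + (- \<i> * (xb2*yb1 - xb1*yb2)) * s)"
    unfolding T_def tX_def tY_def det3_def using cnz s
    apply (simp add: field_simps power2_eq_square)
    apply (simp add: cdef algebra_simps)
    done
  then show ?thesis using v by (simp add: field_simps)
qed


definition PM :: "real \<Rightarrow> c2 \<times> complex \<Rightarrow> c4" where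
  "PM N x = ((fst (fst x) - snd x * cnj (snd (fst x)), snd (fst x) + snd x * cnj (fst (fst x))),
     (- cnj (snd (fst x)) + inverse (snd x) * of_real (1 + N / nsqr (fst x)) * fst (fst x),
      cnj (fst (fst x)) + inverse (snd x) * of_real (1 + N / nsqr (fst x)) * snd (fst x)))"

lemma PhiMap_PM: assumes "N > 0" shows "PhiMap N = PM N"
  using assms by (auto simp: fun_eq_iff PhiMap_def PM_def Phi_def theta_sq nsq_ri hatc_def cscal_def)

definition DPM :: "real \<Rightarrow> c2 \<times> complex \<Rightarrow> c2 \<times> complex \<Rightarrow> c4" where
  "DPM N x hv = (let u = fst x; s = snd x; X = fst hv; h = snd hv;
      T = complex_of_real (1 + N / nsq u); dT = complex_of_real (- N * dn u X / (nsq u)\<^sup>2) in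
     ((fst X - h * cnj (snd u) - s * cnj (snd X), snd X + h * cnj (fst u) + s * cnj (fst X)),
      (- cnj (snd X) - h / s^2 * T * fst u + (dT * fst u + T * fst X) / s,
       cnj (fst X) - h / s^2 * T * snd u + (dT * snd u + T * snd X) / s)))"

lemma dPM: assumes "fst x \<noteq> 0" "snd x \<noteq> 0"
  shows "(PM N has_derivative DPM N x) (at x)"
proof -
  have p: "nsqr (fst x) > 0" using nsq_pos[OF assms(1)] by (simp add: nsq_ri)
  show ?thesis unfolding PM_def[abs_def] DPM_def[abs_def] Let_def nsq_ri
    using p assms(2)
    by (auto intro!: derivative_eq_intros d_nsqr[THEN has_derivative_compose[OF has_derivative_fst[OF has_derivative_ident]]]
        simp: fun_eq_iff field_simps power2_eq_square)
qed


lemma dn_c: "complex_of_real (dn u X) = fst X * cnj (fst u) + fst u * cnj (fst X) + snd X * cnj (snd u) + snd u * cnj (snd X)"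
  by (simp add: dn_def complex_eq_iff algebra_simps)

lemma det3_cong: "a11=b11 \<Longrightarrow> a12=b12 \<Longrightarrow> a13=b13 \<Longrightarrow> a21=b21 \<Longrightarrow> a22=b22 \<Longrightarrow> a23=b23 \<Longrightarrow>
   a31=b31 \<Longrightarrow> a32=b32 \<Longrightarrow> a33=b33 \<Longrightarrow> det3 a11 a12 a13 a21 a22 a23 a31 a32 a33 = det3 b11 b12 b13 b21 b22 b23 b31 b32 b33"
  by simp

lemma pull: assumes N: "N > 0" and u: "u \<noteq> 0" and s: "\<sigma> \<noteq> 0" and v: "fst u - \<sigma> * cnj (snd u) \<noteq> 0"
  shows "pullOmega N (u, \<sigma>) ((0,0), \<i> * \<sigma>) (X, 0) (Y, 0)
     = (- \<i> * (1 + of_real N / of_real (nsq u)) * (snd X * fst Y - fst X * snd Y)) / \<sigma>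
       + omegaN N u X Y + (- \<i> * (cnj (snd X) * cnj (fst Y) - cnj (fst X) * cnj (snd Y))) * \<sigma>"
proof -
  define c where "c = fst u * cnj (fst u) + snd u * cnj (snd u)"
  have cdef: "complex_of_real (nsq u) = c" by (simp add: c_def nsq_c)
  have n: "nsq u > 0" using nsq_pos[OF u] .
  have cnz: "c \<noteq> 0" using n cdef by (metis of_real_eq_0_iff less_irrefl)
  have fd: "frechet_derivative (PhiMap N) (at (u, \<sigma>)) = DPM N (u, \<sigma>)"
    unfolding PhiMap_PM[OF N] by (rule frechet_derivative_at[symmetric], rule dPM) (use u s in auto)
  note K = key[OF c_def cnz s, where ?x1.0="fst X" and ?x2.0="snd X" and ?xb1.0="cnj (fst X)" and ?xb2.0="cnj (snd X)"
     and ?y1.0="fst Y" and ?y2.0="snd Y" and ?yb1.0="cnj (fst Y)" and ?yb2.0="cnj (snd Y)" and n="of_real N", OF v]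
  have "pullOmega N (u, \<sigma>) ((0,0), \<i> * \<sigma>) (X, 0) (Y, 0) = 
     - det3 (\<i> * \<sigma> * (- cnj (snd u))) (\<i> * \<sigma> * cnj (fst u)) (- (\<i> * \<sigma>) / \<sigma>\<^sup>2 * (1 + of_real N / c) * fst u)
     (fst X - \<sigma> * cnj (snd X)) (snd X + \<sigma> * cnj (fst X))
     (- cnj (snd X) + ((- of_real N * (fst X * cnj (fst u) + fst u * cnj (fst X) + snd X * cnj (snd u) + snd u * cnj (snd X)) / c\<^sup>2) * fst u + (1 + of_real N / c) * fst X) / \<sigma>)
     (fst Y - \<sigma> * cnj (snd Y)) (snd Y + \<sigma> * cnj (fst Y))
     (- cnj (snd Y) + ((- of_real N * (fst Y * cnj (fst u) + fst u * cnj (fst Y) + snd Y * cnj (snd u) + snd u * cnj (snd Y)) / c\<^sup>2) * fst u + (1 + of_real N / c) * fst Y) / \<sigma>) /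
     (fst u - \<sigma> * cnj (snd u))"
    unfolding pullOmega_def Let_def fd
    using v apply (simp add: OmegaN_def DPM_def PhiMap_PM[OF N] PM_def Let_def nsq_ri[symmetric] cdef dn_c)
    done
  also have "\<dots> = (- \<i> * (1 + of_real N / of_real (nsq u)) * (snd X * fst Y - fst X * snd Y)) / \<sigma>
       + omegaN N u X Y + (- \<i> * (cnj (snd X) * cnj (fst Y) - cnj (fst X) * cnj (snd Y))) * \<sigma>"
    unfolding K by (simp add: omegaN_def wedge2_def cdef algebra_simps power2_eq_square) 
  finally show ?thesis .
qed


lemma int_cis: "((\<lambda>t. cis t) has_integral 0) {0..2*pi}"
proof -
  have "((\<lambda>t. cis t) has_integral ((\<lambda>t. - \<i> * cis t) (2*pi) - (\<lambda>t. - \<i> * cis t) 0)) {0..2*pi}"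
    apply (rule fundamental_theorem_of_calculus)
     apply simp
    unfolding has_vector_derivative_def
    by (auto intro!: derivative_eq_intros simp: fun_eq_iff algebra_simps)
  then show ?thesis by simp
qed

lemma int_cism: "((\<lambda>t. cis (- t)) has_integral 0) {0..2*pi}"
proof -
  have "((\<lambda>t. cis (- t)) has_integral ((\<lambda>t. \<i> * cis (- t)) (2*pi) - (\<lambda>t. \<i> * cis (- t)) 0)) {0..2*pi}"
    apply (rule fundamental_theorem_of_calculus)
     apply simp
    unfolding has_vector_derivative_def
    by (auto intro!: derivative_eq_intros simp: fun_eq_iff algebra_simps)
  moreover have "cis (-(2*pi)) = 1" by (simp add: complex_eq_iff)
  ultimately show ?thesis by simp
qed

lemma fib_eq: assumes N: "N > 0" and u: "u \<noteq> 0" and e: "\<epsilon> > 0"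
  and v: "\<And>t. fst u - (of_real \<epsilon> * cis t) * cnj (snd u) \<noteq> 0"
  shows "fibre_int N \<epsilon> u X Y / (2 * of_real pi) = omegaN N u X Y"
proof -
  define \<alpha> where "\<alpha> = (- \<i> * (1 + of_real N / of_real (nsq u)) * (snd X * fst Y - fst X * snd Y))"
  define \<gamma> where "\<gamma> = (- \<i> * (cnj (snd X) * cnj (fst Y) - cnj (fst X) * cnj (snd Y)))"
  have eq: "pullOmega N (u, of_real \<epsilon> * cis t) ((0,0), \<i> * of_real \<epsilon> * cis t) (X, 0) (Y, 0)
     = (\<alpha> / of_real \<epsilon>) * cis (- t) + omegaN N u X Y + (\<gamma> * of_real \<epsilon>) * cis t" for t
  proof -
    have s: "complex_of_real \<epsilon> * cis t \<noteq> 0" using e by simp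
    have "pullOmega N (u, of_real \<epsilon> * cis t) ((0,0), \<i> * (of_real \<epsilon> * cis t)) (X, 0) (Y, 0)
       = \<alpha> / (of_real \<epsilon> * cis t) + omegaN N u X Y + \<gamma> * (of_real \<epsilon> * cis t)"
      unfolding \<alpha>_def \<gamma>_def by (rule pull[OF N u s v])
    moreover have a: "\<i> * of_real \<epsilon> * cis t = \<i> * (of_real \<epsilon> * cis t)" by (simp add: mult.assoc)
    moreover have b: "\<alpha> / (of_real \<epsilon> * cis t) = (\<alpha> / of_real \<epsilon>) * cis (- t)"
      by (simp add: divide_inverse inverse_mult_distrib mult.assoc flip: cis_inverse)
    ultimately show ?thesis by (simp add: algebra_simps)
  qed
  have "((\<lambda>t. (\<alpha> / of_real \<epsilon>) * cis (- t) + omegaN N u X Y + (\<gamma> * of_real \<epsilon>) * cis t) has_integral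
        ((\<alpha> / of_real \<epsilon>) * 0 + (2*pi) *\<^sub>R omegaN N u X Y + (\<gamma> * of_real \<epsilon>) * 0)) {0..2*pi}"
    using has_integral_const_real[of "omegaN N u X Y" 0 "2*pi"]
    by (intro has_integral_add has_integral_mult_right int_cis int_cism) simp_all
  then have "fibre_int N \<epsilon> u X Y = (2 * pi) *\<^sub>R omegaN N u X Y"
    unfolding fibre_int_def eq by (simp add: integral_unique)
  then show ?thesis by (simp add: scaleR_conv_of_real)
qed

lemma ev_v: assumes u: "u \<noteq> 0"
  shows "\<forall>\<^sub>F \<epsilon> in at_right 0. \<epsilon> > 0 \<and> (\<forall>t. fst u - (of_real \<epsilon> * cis t) * cnj (snd u) \<noteq> 0)"
proof (cases "fst u = 0")
  case True
  then have "snd u \<noteq> 0" using u by (cases u) (auto simp: zero_prod_def)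
  then show ?thesis using True unfolding eventually_at_right_field
    by (intro exI[of _ 1]) auto
next
  case False
  define b where "b = cmod (fst u) / (cmod (snd u) + 1)"
  have b: "b > 0" using False by (simp add: b_def add_nonneg_pos)
  show ?thesis unfolding eventually_at_right_field
  proof (intro exI[of _ b] conjI allI impI b)
    fix \<epsilon> t :: real assume e: "\<epsilon> > 0" "\<epsilon> < b"
    show "\<epsilon> > 0" by fact
    have "cmod ((of_real \<epsilon> * cis t) * cnj (snd u)) = \<epsilon> * cmod (snd u)"
      using e by (simp add: norm_mult)
    also have "\<dots> \<le> b * cmod (snd u)" using e by (simp add: mult_right_mono)
    also have "\<dots> < cmod (fst u)"
    proof -
      have "cmod (fst u) * cmod (snd u) < cmod (fst u) * (cmod (snd u) + 1)" using False by simp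
      moreover have p: "0 < cmod (snd u) + 1" by (metis norm_ge_zero add_nonneg_pos zero_less_one)
      ultimately show ?thesis unfolding b_def times_divide_eq_left
        by (simp add: pos_divide_less_eq mult.commute)
    qed
    finally show "fst u - (of_real \<epsilon> * cis t) * cnj (snd u) \<noteq> 0" by auto
  qed
qed

lemma part3: assumes N: "N > 0" and u: "u \<noteq> 0"
  shows "\<forall>\<^sub>F \<epsilon> in at_right 0. \<forall>X Y. fibre_int N \<epsilon> u X Y / (2 * of_real pi) = omegaN N u X Y"
  using ev_v[OF u] by eventually_elim (use fib_eq[OF N u] in blast)

theorem mainTheorem3:
  fixes N :: real
  assumes N: "N > 0"
  shows "(\<forall>u \<sigma>. u \<noteq> 0 \<longrightarrow> \<sigma> \<noteq> 0 \<longrightarrow> Phi N u \<sigma> \<in> S N)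
    \<and> (iota ` S N \<subseteq> S N \<and> (\<forall>p\<in>S N. iota (iota p) = p) \<and> (\<forall>p\<in>S N. iota p \<noteq> p)
       \<and> antiholomorphic_on UNIV iota
       \<and> (\<forall>u \<sigma>. u \<noteq> 0 \<longrightarrow> \<sigma> \<noteq> 0 \<longrightarrow>
            iota (Phi N u (of_real (theta N u) * \<sigma>))
              = Phi N u (of_real (theta N u) * (- 1 / cnj \<sigma>))))
    \<and> (\<forall>u. u \<noteq> 0 \<longrightarrow>
         (\<forall>\<^sub>F \<epsilon> in at_right 0. \<forall>X Y.
            fibre_int N \<epsilon> u X Y / (2 * of_real pi) = omegaN N u X Y))
    \<and> (\<forall>u. u \<noteq> 0 \<longrightarrow> (\<forall>X Y. omegaN N u X Y = i_ddbar (Kpot N) u X Y))"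
  using part1[OF N] part2a part2b part2c[OF N] part2d part2e[OF N] part3[OF N] part4[OF N]
  by blast

end
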